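(* Let $(\mathfrak{A},\varphi,\tau)$ be a $*$-dynamical system, and let $A\in\mathfrak{A}$ and $\varepsilon>0$. Then the set $$E=\left\{k\in\mathbb{N}:\left|\varphi\left(A^*\tau^k(A)\right)\right|>\left|\varphi(A)\right|^2-\varepsilon\right\}$$ is relatively dense in $\mathbb{N}=\{1,2,3,\dots\}$.
   Context: All algebras are over $\mathbb{C}$. A unital $*$-algebra is a complex algebra with an involution $*$ and a unit $1$. A state on a unital $*$-algebra $\mathfrak{A}$ is a linear functional $\varphi$ with $\varphi(A^*A)\ge0$ for all $A$ and $\varphi(1)=1$. A $*$-dynamical system is a triple $(\mathfrak{A},\varphi,\tau)$ where $\mathfrak{A}$ is a unital $*$-algebra, $\varphi$ a state on $\mathfrak{A}$, and $\tau:\mathfrak{A}\to\mathfrak{A}$ a linear map (not necessarily multiplicative) with $\tau(1)=1$ and $\varphi(\tau(A)^*\tau(A))\le\varphi(A^*A)$ for all $A\in\mathfrak{A}$. A set $E\subseteq\mathbb{N}$ is relatively dense in $\mathbb{N}$ if there exists $n\in\mathbb{N}$ such that $E\cap\{j,\dots,j+n-1\}\neq\emptyset$ for every $j\in\mathbb{N}$. *)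

theory Defs
  imports Complex_Main
begin

definition unital_star_algebra :: "(complex \<Rightarrow> 'a::ring_1 \<Rightarrow> 'a) \<Rightarrow> ('a \<Rightarrow> 'a) \<Rightarrow> bool" where
  "unital_star_algebra sm st \<longleftrightarrow>
     (\<forall>a x y. sm a (x + y) = sm a x + sm a y) \<and>
     (\<forall>a b x. sm (a + b) x = sm a x + sm b x) \<and>
     (\<forall>a b x. sm (a * b) x = sm a (sm b x)) \<and>
     (\<forall>x. sm 1 x = x) \<and>
     (\<forall>a x y. sm a (x * y) = sm a x * y) \<and>
     (\<forall>a x y. sm a (x * y) = x * sm a y) \<and>
     (\<forall>x. st (st x) = x) \<and>
     (\<forall>x y. st (x + y) = st x + st y) \<and>
     (\<forall>a x. st (sm a x) = sm (cnj a) (st x)) \<and>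
     (\<forall>x y. st (x * y) = st y * st x)"

definition complex_linear :: "(complex \<Rightarrow> 'a::ring_1 \<Rightarrow> 'a) \<Rightarrow> (complex \<Rightarrow> 'b::ring_1 \<Rightarrow> 'b) \<Rightarrow> ('a \<Rightarrow> 'b) \<Rightarrow> bool" where
  "complex_linear smA smB f \<longleftrightarrow>
     (\<forall>x y. f (x + y) = f x + f y) \<and> (\<forall>c x. f (smA c x) = smB c (f x))"

definition state :: "(complex \<Rightarrow> 'a::ring_1 \<Rightarrow> 'a) \<Rightarrow> ('a \<Rightarrow> 'a) \<Rightarrow> ('a \<Rightarrow> complex) \<Rightarrow> bool" where
  "state sm st \<phi> \<longleftrightarrow>
     complex_linear sm (*) \<phi> \<and>
     (\<forall>x. Im (\<phi> (st x * x)) = 0 \<and> Re (\<phi> (st x * x)) \<ge> 0) \<and>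
     \<phi> 1 = 1"

text \<open>A *-dynamical system (A, phi, tau). Since phi is a state, both sides of the
Schwarz-type inequality are nonnegative reals, so comparing real parts is exact.\<close>
definition star_dynamical_system ::
  "(complex \<Rightarrow> 'a::ring_1 \<Rightarrow> 'a) \<Rightarrow> ('a \<Rightarrow> 'a) \<Rightarrow> ('a \<Rightarrow> complex) \<Rightarrow> ('a \<Rightarrow> 'a) \<Rightarrow> bool" where
  "star_dynamical_system sm st \<phi> \<tau> \<longleftrightarrow>
     unital_star_algebra sm st \<and> state sm st \<phi> \<and>
     complex_linear sm sm \<tau> \<and> \<tau> 1 = 1 \<and>
     (\<forall>x. Re (\<phi> (st (\<tau> x) * \<tau> x)) \<le> Re (\<phi> (st x * x)))"

definition relatively_dense :: "nat set \<Rightarrow> bool" where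
  "relatively_dense E \<longleftrightarrow> (\<exists>n::nat. n \<ge> 1 \<and> (\<forall>j::nat. j \<ge> 1 \<longrightarrow> E \<inter> {j..<j+n} \<noteq> {}))"

end

theory Submission
  imports Defs
begin
locale sds =
  fixes sm :: "complex \<Rightarrow> 'a::ring_1 \<Rightarrow> 'a" and st :: "'a \<Rightarrow> 'a"
    and \<phi> :: "'a \<Rightarrow> complex" and \<tau> :: "'a \<Rightarrow> 'a"
  assumes sds: "star_dynamical_system sm st \<phi> \<tau>"
begin

lemma usa: "unital_star_algebra sm st" using sds unfolding star_dynamical_system_def by auto

lemma sm_add: "sm c (x + y) = sm c x + sm c y" using usa unfolding unital_star_algebra_def by auto
lemma sm_add2: "sm (a + b) x = sm a x + sm b x" using usa unfolding unital_star_algebra_def by auto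
lemma sm_mult: "sm (a * b) x = sm a (sm b x)" using usa unfolding unital_star_algebra_def by auto
lemma sm_one[simp]: "sm 1 x = x" using usa unfolding unital_star_algebra_def by auto
lemma sm_left: "sm a (x * y) = sm a x * y" using usa unfolding unital_star_algebra_def by auto
lemma sm_right: "sm a (x * y) = x * sm a y" using usa unfolding unital_star_algebra_def by auto
lemma st_st[simp]: "st (st x) = x" using usa unfolding unital_star_algebra_def by auto
lemma st_add: "st (x + y) = st x + st y" using usa unfolding unital_star_algebra_def by auto
lemma st_sm: "st (sm a x) = sm (cnj a) (st x)" using usa unfolding unital_star_algebra_def by auto
lemma st_mult: "st (x * y) = st y * st x" using usa unfolding unital_star_algebra_def by auto

lemma sm_zero[simp]: "sm 0 x = 0"
proof -
  have "sm 0 x + sm 0 x = sm 0 x + 0" using sm_add2[of 0 0 x] by simp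
  then show ?thesis by simp
qed
lemma sm_zero2[simp]: "sm c 0 = 0"
proof -
  have "sm c 0 + sm c 0 = sm c 0 + 0" using sm_add[of c 0 0] by simp
  then show ?thesis by simp
qed
lemma sm_minus: "sm c (- x) = - sm c x"
proof -
  have "sm c (-x) + sm c x = 0" using sm_add[of c "-x" x] by simp
  then show ?thesis by (simp add: eq_neg_iff_add_eq_0)
qed
lemma sm_neg: "sm (- c) x = - sm c x"
proof -
  have "sm (-c) x + sm c x = 0" using sm_add2[of "-c" c x] by simp
  then show ?thesis by (simp add: eq_neg_iff_add_eq_0)
qed
lemma sm_diff: "sm c (x - y) = sm c x - sm c y"
  unfolding diff_conv_add_uminus sm_add sm_minus by (rule refl)
lemma sm_diff2: "sm (a - b) x = sm a x - sm b x"
  unfolding diff_conv_add_uminus sm_add2 sm_neg by (rule refl)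
lemma sm_sum: "sm c (sum f S) = (\<Sum>k\<in>S. sm c (f k))"
  by (induction S rule: infinite_finite_induct) (auto simp: sm_add)

lemma st_zero[simp]: "st 0 = 0"
proof -
  have "st 0 + st 0 = st 0 + 0" using st_add[of 0 0] by simp
  then show ?thesis by simp
qed
lemma st_minus: "st (- x) = - st x"
proof -
  have "st (-x) + st x = 0" using st_add[of "-x" x] by simp
  then show ?thesis by (simp add: eq_neg_iff_add_eq_0)
qed
lemma st_diff: "st (x - y) = st x - st y"
  unfolding diff_conv_add_uminus st_add st_minus by (rule refl)
lemma st_one[simp]: "st 1 = 1"
proof -
  have "1 = st (st 1 * 1)" by simp
  also have "... = st 1 * st (st 1)" by (simp only: st_mult)
  finally show ?thesis by simp
qed

lemma stt: "state sm st \<phi>" using sds unfolding star_dynamical_system_def by auto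
lemma phi_add: "\<phi> (x + y) = \<phi> x + \<phi> y" using stt unfolding state_def complex_linear_def by auto
lemma phi_sm: "\<phi> (sm c x) = c * \<phi> x" using stt unfolding state_def complex_linear_def by auto
lemma phi_pos: "Im (\<phi> (st x * x)) = 0" "Re (\<phi> (st x * x)) \<ge> 0" using stt unfolding state_def by auto
lemma phi_one[simp]: "\<phi> 1 = 1" using stt unfolding state_def by auto
lemma phi_zero[simp]: "\<phi> 0 = 0" using phi_sm[of 0 0] by simp
lemma phi_minus: "\<phi> (- x) = - \<phi> x"
  using phi_add[of "-x" x] by (simp add: eq_neg_iff_add_eq_0)
lemma phi_diff: "\<phi> (x - y) = \<phi> x - \<phi> y" unfolding diff_conv_add_uminus phi_add phi_minus by (rule refl)
lemma phi_sum: "\<phi> (sum f S) = (\<Sum>k\<in>S. \<phi> (f k))"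
  by (induction S rule: infinite_finite_induct) (auto simp: phi_add)

lemma tau_lin: "complex_linear sm sm \<tau>" using sds unfolding star_dynamical_system_def by auto
lemma tau_add: "\<tau> (x + y) = \<tau> x + \<tau> y" using tau_lin unfolding complex_linear_def by auto
lemma tau_sm: "\<tau> (sm c x) = sm c (\<tau> x)" using tau_lin unfolding complex_linear_def by auto
lemma tau_one[simp]: "\<tau> 1 = 1" using sds unfolding star_dynamical_system_def by auto
lemma tau_contr: "Re (\<phi> (st (\<tau> x) * \<tau> x)) \<le> Re (\<phi> (st x * x))"
  using sds unfolding star_dynamical_system_def by auto

lemma taun_add: "(\<tau>^^n) (x + y) = (\<tau>^^n) x + (\<tau>^^n) y"
  by (induction n) (auto simp: tau_add)
lemma taun_sm: "(\<tau>^^n) (sm c x) = sm c ((\<tau>^^n) x)"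
  by (induction n) (auto simp: tau_sm)
lemma taun_one[simp]: "(\<tau>^^n) 1 = 1"
  by (induction n) auto
lemma taun_zero[simp]: "(\<tau>^^n) 0 = 0"
  using taun_sm[of n 0 0] by simp
lemma taun_minus: "(\<tau>^^n) (- x) = - (\<tau>^^n) x"
  using taun_add[of n "-x" x] by (simp add: eq_neg_iff_add_eq_0)
lemma taun_diff: "(\<tau>^^n) (x - y) = (\<tau>^^n) x - (\<tau>^^n) y"
  unfolding diff_conv_add_uminus taun_add taun_minus by (rule refl)
lemma taun_sum: "(\<tau>^^n) (sum f S) = (\<Sum>k\<in>S. (\<tau>^^n) (f k))"
  by (induction S rule: infinite_finite_induct) (auto simp: taun_add)

definition B :: "'a \<Rightarrow> 'a \<Rightarrow> complex" where "B a b = \<phi> (st a * b)"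
definition N :: "'a \<Rightarrow> real" where "N a = Re (B a a)"
definition sr :: "real \<Rightarrow> 'a \<Rightarrow> 'a" where "sr r x = sm (complex_of_real r) x"

lemma B_add_left: "B (a + b) c = B a c + B b c"
  by (simp add: B_def st_add distrib_right phi_add)
lemma B_add_right: "B c (a + b) = B c a + B c b"
  by (simp add: B_def distrib_left phi_add)
lemma B_sm_left: "B (sm t a) b = cnj t * B a b"
  by (simp add: B_def st_sm sm_left[symmetric] phi_sm)
lemma B_sm_right: "B a (sm t b) = t * B a b"
  by (simp add: B_def sm_right[symmetric] phi_sm)
lemma B_minus_left: "B (- a) b = - B a b"
  by (simp add: B_def st_minus phi_minus)
lemma B_minus_right: "B a (- b) = - B a b"
  by (simp add: B_def phi_minus)
lemma B_diff_left: "B (a - b) c = B a c - B b c"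
  unfolding diff_conv_add_uminus B_add_left B_minus_left by (rule refl)
lemma B_diff_right: "B c (a - b) = B c a - B c b"
  unfolding diff_conv_add_uminus B_add_right B_minus_right by (rule refl)
lemma B_sum_right: "B a (sum f S) = (\<Sum>k\<in>S. B a (f k))"
  by (simp add: B_def sum_distrib_left phi_sum)
lemma B_real: "Im (B a a) = 0" and N_nonneg: "N a \<ge> 0"
  using phi_pos unfolding B_def N_def by auto

lemma B_herm: "B b a = cnj (B a b)"
proof -
  have 1: "Im (B (a + b) (a + b)) = 0" by (rule B_real)
  have 2: "Im (B (a + sm \<i> b) (a + sm \<i> b)) = 0" by (rule B_real)
  from 1 have "Im (B a b) + Im (B b a) = 0"
    by (simp add: B_add_left B_add_right B_real)
  moreover from 2 have "Re (B a b) - Re (B b a) = 0"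
    by (simp add: B_add_left B_add_right B_sm_left B_sm_right B_real)
  ultimately show ?thesis by (simp add: complex_eq_iff)
qed


lemma Re_B_swap: "Re (B b a) = Re (B a b)"
  by (subst B_herm) simp

lemma N_add: "N (a + b) = N a + 2 * Re (B a b) + N b"
proof -
  have "Re (B b a) = Re (B a b)" by (rule Re_B_swap)
  then show ?thesis unfolding N_def by (simp add: B_add_left B_add_right)
qed
lemma N_diff: "N (a - b) = N a - 2 * Re (B a b) + N b"
proof -
  have "Re (B b a) = Re (B a b)" by (rule Re_B_swap)
  then show ?thesis unfolding N_def by (simp add: B_diff_left B_diff_right)
qed
lemma N_add_le: "N (a + b) \<le> 2 * N a + 2 * N b"
  using N_add[of a b] N_diff[of a b] N_nonneg[of "a - b"] by linarith
lemma N_diff_le: "N (a - b) \<le> 2 * N a + 2 * N b"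
  using N_add[of a b] N_diff[of a b] N_nonneg[of "a + b"] by linarith
lemma N_swap: "N (a - b) = N (b - a)"
  using N_diff[of a b] N_diff[of b a] Re_B_swap[of a b] by linarith

lemma B_sr_left: "B (sr r a) b = of_real r * B a b"
  unfolding sr_def by (simp add: B_sm_left)
lemma B_sr_right: "B a (sr r b) = of_real r * B a b"
  unfolding sr_def by (simp add: B_sm_right)
lemma Re_B_sr_right: "Re (B a (sr r b)) = r * Re (B a b)"
  by (simp add: B_sr_right)
lemma Re_B_sr_left: "Re (B (sr r a) b) = r * Re (B a b)"
  by (simp add: B_sr_left)
lemma N_sr: "N (sr r a) = r^2 * N a"
proof -
  have "B (sr r a) (sr r a) = of_real r * (of_real r * B a a)"
    by (simp only: B_sr_left B_sr_right)
  then have "Re (B (sr r a) (sr r a)) = r * (r * Re (B a a))" by simp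
  then show ?thesis unfolding N_def by (simp add: power2_eq_square)
qed
lemma sr_sr: "sr a (sr b x) = sr (a * b) x"
  unfolding sr_def by (simp add: sm_mult)
lemma sr_comm: "sr a (sr b x) = sr b (sr a x)"
  by (simp add: sr_sr mult.commute)
lemma sr_add: "sr r (x + y) = sr r x + sr r y"
  unfolding sr_def by (simp add: sm_add)
lemma sr_diff: "sr r (x - y) = sr r x - sr r y"
  unfolding sr_def by (simp add: sm_diff)
lemma sr_add2: "sr (a + b) x = sr a x + sr b x"
  unfolding sr_def by (simp add: sm_add2)
lemma sr_one[simp]: "sr 1 x = x" unfolding sr_def by simp
lemma sr_split: "sr t z + sr (1 - t) z = z"
  using sr_add2[of t "1 - t" z] by simp
lemma sr_sum: "sr r (sum f S) = (\<Sum>k\<in>S. sr r (f k))"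
  unfolding sr_def by (simp add: sm_sum)
lemma taun_sr: "(\<tau>^^n) (sr r x) = sr r ((\<tau>^^n) x)"
  unfolding sr_def by (simp add: taun_sm)
lemma tau_sr: "\<tau> (sr r x) = sr r (\<tau> x)"
  unfolding sr_def by (simp add: tau_sm)
lemma phi_sr: "\<phi> (sr r x) = of_real r * \<phi> x"
  unfolding sr_def by (simp add: phi_sm)

lemma N_convex:
  assumes "0 \<le> t" "t \<le> 1"
  shows "N (sr t a + sr (1 - t) b) \<le> t * N a + (1 - t) * N b"
proof -
  define R where "R = Re (B a b)"
  have eq: "N (sr t a + sr (1 - t) b) = t^2 * N a + 2 * (t * (1 - t) * R) + (1 - t)^2 * N b"
    unfolding R_def by (simp add: N_add N_sr B_sr_left B_sr_right)
  have "0 \<le> N a - 2 * R + N b" using N_diff[of a b] N_nonneg[of "a - b"] unfolding R_def by simp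
  then have "0 \<le> t * (1 - t) * (N a - 2 * R + N b)" using assms by simp
  moreover have "t * N a + (1 - t) * N b - (t^2 * N a + 2 * (t * (1 - t) * R) + (1 - t)^2 * N b)
      = t * (1 - t) * (N a - 2 * R + N b)" by (simp add: algebra_simps power2_eq_square)
  ultimately show ?thesis using eq by linarith
qed

lemma N_tau: "N (\<tau> x) \<le> N x"
  using tau_contr unfolding N_def B_def by simp
lemma N_taun: "N ((\<tau>^^n) x) \<le> N x"
  by (induction n) (auto intro: order_trans[OF N_tau])

lemma lower_bound:
  assumes "r > 0"
  shows "- (r * N a + N d / r) \<le> 2 * Re (B a d)"
proof -
  have "0 \<le> N (sr r a + d)" by (rule N_nonneg)
  also have "N (sr r a + d) = r^2 * N a + 2 * (r * Re (B a d)) + N d"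
    by (simp add: N_add N_sr Re_B_sr_left)
  also have "... = r * (r * N a + 2 * Re (B a d) + N d / r)"
    using assms by (simp add: field_simps power2_eq_square)
  finally have "0 \<le> r * N a + 2 * Re (B a d) + N d / r"
    using assms by (simp add: zero_le_mult_iff)
  then show ?thesis by linarith
qed

lemma B_one_left: "B 1 u = \<phi> u" unfolding B_def by simp
lemma N_one: "N 1 = 1" unfolding N_def B_def by simp

lemma N_sm: "N (sm t u) = (cmod t)^2 * N u"
proof -
  have "B (sm t u) (sm t u) = (t * cnj t) * B u u" by (simp add: B_sm_left B_sm_right)
  also have "t * cnj t = of_real ((cmod t)^2)" by (metis complex_norm_square of_real_power)
  finally show ?thesis unfolding N_def by simp
qed

lemma N_one_plus: "N (1 + sm t u) = 1 + 2 * Re (t * \<phi> u) + (cmod t)^2 * N u"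
  by (simp add: N_add N_one N_sm B_sm_right B_one_left)

lemma phi_tau: "\<phi> (\<tau> z) = \<phi> z"
proof -
  define y where "y = z - sm (\<phi> z) 1"
  have phiy: "\<phi> y = 0" unfolding y_def by (simp add: phi_diff phi_sm)
  define a where "a = \<phi> (\<tau> y)"
  have a_eq: "a = \<phi> (\<tau> z) - \<phi> z"
    unfolding a_def y_def using taun_diff[of 1 z "sm (\<phi> z) 1"] taun_sm[of 1 "\<phi> z" 1]
    by (simp add: phi_diff phi_sm)
  have key: "2 * (cmod a)^2 \<le> s * ((cmod a)^2 * N y)" if s: "s > 0" for s
  proof -
    define t where "t = complex_of_real s * cnj a"
    have "\<tau> (1 + sm t y) = 1 + sm t (\<tau> y)" by (simp add: tau_add tau_sm)
    then have "N (1 + sm t (\<tau> y)) \<le> N (1 + sm t y)" using N_tau[of "1 + sm t y"] by simp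
    then have "1 + 2 * Re (t * a) + (cmod t)^2 * N (\<tau> y) \<le> 1 + 2 * Re (t * 0) + (cmod t)^2 * N y"
      unfolding N_one_plus a_def[symmetric] phiy .
    moreover have "Re (t * a) = s * (cmod a)^2"
    proof -
      have "Re (t * a) = s * ((Re a)^2 + (Im a)^2)" unfolding t_def by (simp add: algebra_simps power2_eq_square)
      then show ?thesis by (simp add: cmod_power2)
    qed
    moreover have "(cmod t)^2 = s^2 * (cmod a)^2"
      unfolding t_def using s by (simp add: norm_mult power_mult_distrib)
    moreover have "0 \<le> s^2 * (cmod a)^2 * N (\<tau> y)" using N_nonneg by simp
    ultimately have "2 * (s * (cmod a)^2) \<le> s^2 * (cmod a)^2 * N y" by simp
    then have "s * (2 * (cmod a)^2) \<le> s * (s * ((cmod a)^2 * N y))"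
      by (simp add: power2_eq_square algebra_simps)
    then show ?thesis using s by simp
  qed
  have "(cmod a)^2 = 0"
  proof (rule ccontr)
    assume ne: "(cmod a)^2 \<noteq> 0"
    define s where "s = 1 / (N y + 1)"
    have Ny: "N y \<ge> 0" by (rule N_nonneg)
    have s: "s > 0" unfolding s_def using Ny by simp
    have "s * N y < 1" unfolding s_def using Ny by (simp add: field_simps)
    have q: "(cmod a)^2 > 0" using ne by simp
    have "2 * (cmod a)^2 \<le> (s * N y) * (cmod a)^2" using key[OF s] by (simp add: algebra_simps)
    also have "... \<le> 1 * (cmod a)^2" using \<open>s * N y < 1\<close> q by (intro mult_right_mono) auto
    finally show False using q by simp
  qed
  then have "a = 0" by simp
  then show ?thesis using a_eq by simp
qed

lemma phi_taun: "\<phi> ((\<tau>^^n) z) = \<phi> z"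
  by (induction n) (auto simp: phi_tau)


inductive_set CC :: "'a \<Rightarrow> 'a set" for A where
  orb: "(\<tau>^^k) A \<in> CC A"
| cmb: "a \<in> CC A \<Longrightarrow> b \<in> CC A \<Longrightarrow> 0 \<le> t \<Longrightarrow> t \<le> 1 \<Longrightarrow> sr t a + sr (1 - t) b \<in> CC A"

lemma C_tau: "c \<in> CC A \<Longrightarrow> \<tau> c \<in> CC A"
proof (induction rule: CC.induct)
  case (orb k)
  then show ?case using CC.orb[of "Suc k" A] by simp
next
  case (cmb a b t)
  then show ?case by (simp add: tau_add tau_sr CC.cmb)
qed
lemma C_taun: "c \<in> CC A \<Longrightarrow> (\<tau>^^n) c \<in> CC A"
  by (induction n) (auto intro: C_tau)
lemma C_N: "c \<in> CC A \<Longrightarrow> N c \<le> N A"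
proof (induction rule: CC.induct)
  case (orb k)
  then show ?case by (rule N_taun)
next
  case (cmb a b t)
  have "N (sr t a + sr (1 - t) b) \<le> t * N a + (1 - t) * N b" using cmb by (intro N_convex) auto
  also have "... \<le> t * N A + (1 - t) * N A" using cmb by (intro add_mono mult_left_mono) auto
  finally show ?case by (simp add: algebra_simps)
qed
lemma C_phi: "c \<in> CC A \<Longrightarrow> \<phi> c = \<phi> A"
proof (induction rule: CC.induct)
  case (orb k)
  then show ?case by (rule phi_taun)
next
  case (cmb a b t)
  then show ?case by (simp add: phi_add phi_sr algebra_simps)
qed
lemma A_in_C: "A \<in> CC A" using CC.orb[of 0 A] by simp

lemma avg_in:
  assumes cl: "\<And>a b t. a \<in> S \<Longrightarrow> b \<in> S \<Longrightarrow> 0 \<le> t \<Longrightarrow> t \<le> 1 \<Longrightarrow> sr t a + sr (1 - t) b \<in> S"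
  shows "(\<forall>k<n. f k \<in> S) \<Longrightarrow> n \<ge> 1 \<Longrightarrow> sr (1 / real n) (\<Sum>k<n. f k) \<in> S"
proof (induction n)
  case 0
  then show ?case by simp
next
  case (Suc n)
  show ?case
  proof (cases "n = 0")
    case True
    then show ?thesis using Suc by simp
  next
    case False
    then have IH: "sr (1 / real n) (\<Sum>k<n. f k) \<in> S" using Suc by simp
    have fn: "f n \<in> S" using Suc by simp
    define t where "t = real n / real (Suc n)"
    have t0: "0 \<le> t" and t1: "t \<le> 1" unfolding t_def by auto
    have "sr t (sr (1 / real n) (\<Sum>k<n. f k)) + sr (1 - t) (f n) \<in> S"
      by (rule cl[OF IH fn t0 t1])
    moreover have "t * (1 / real n) = 1 / real (Suc n)" unfolding t_def using False by simp
    moreover have "1 - t = 1 / real (Suc n)" unfolding t_def by (simp add: field_simps)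
    ultimately show ?thesis by (simp add: sr_sr sr_add)
  qed
qed

definition W :: "nat \<Rightarrow> nat \<Rightarrow> 'a \<Rightarrow> 'a" where
  "W j n c = sr (1 / real n) (\<Sum>k<n. (\<tau>^^(j+k)) c)"

lemma W_in:
  assumes "c \<in> CC A" "n \<ge> 1"
  shows "W j n c \<in> CC A \<and> N (W j n c) \<le> N c"
proof -
  let ?S = "{x \<in> CC A. N x \<le> N c}"
  have "W j n c \<in> ?S"
    unfolding W_def
  proof (rule avg_in)
    fix a b and t :: real
    assume a: "a \<in> ?S" and b: "b \<in> ?S" and t: "0 \<le> t" "t \<le> 1"
    have "N (sr t a + sr (1 - t) b) \<le> t * N a + (1 - t) * N b" using t by (rule N_convex)
    also have "... \<le> t * N c + (1 - t) * N c" using a b t by (intro add_mono mult_left_mono) auto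
    finally show "sr t a + sr (1 - t) b \<in> ?S" using a b t by (auto intro: CC.cmb simp: algebra_simps)
  next
    show "\<forall>k<n. (\<tau>^^(j+k)) c \<in> ?S" using assms by (auto intro: C_taun N_taun)
  next
    show "n \<ge> 1" by fact
  qed
  then show ?thesis by simp
qed

lemma W_comb: "W j n (sr t a + sr s b) = sr t (W j n a) + sr s (W j n b)"
  unfolding W_def by (simp add: taun_add taun_sr sum.distrib sr_sum[symmetric] sr_add sr_comm[of "1 / real n"])

lemma W_diff: "W j n (a - b) = W j n a - W j n b"
  unfolding W_def by (simp add: taun_diff sum_subtractf sr_diff)

lemma orbit_shift: "(\<tau>^^(j+k)) ((\<tau>^^i) A) = (\<tau>^^(j+i+k)) A"
proof -
  have "(\<tau>^^(j+k+i)) A = (\<tau>^^(j+k)) ((\<tau>^^i) A)" by (simp only: funpow_add comp_apply)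
  moreover have "j + k + i = j + i + k" by simp
  ultimately show ?thesis by simp
qed

lemma W_orb_step:
  assumes "n \<ge> 1"
  shows "N (W j n ((\<tau>^^(Suc i)) A) - W j n ((\<tau>^^i) A)) \<le> 4 * N A / (real n)^2"
proof -
  define g where "g m = (\<tau>^^(j+i+m)) A" for m
  have "W j n ((\<tau>^^(Suc i)) A) - W j n ((\<tau>^^i) A) = sr (1 / real n) (\<Sum>k<n. g (Suc k) - g k)"
    unfolding W_def g_def orbit_shift by (simp add: sr_diff sum_subtractf)
  also have "... = sr (1 / real n) (g n - g 0)" by (simp add: sum_lessThan_telescope)
  finally have eq: "W j n ((\<tau>^^(Suc i)) A) - W j n ((\<tau>^^i) A) = sr (1 / real n) (g n - g 0)" .
  have "N (g n - g 0) \<le> 2 * N (g n) + 2 * N (g 0)" by (rule N_diff_le)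
  also have "... \<le> 2 * N A + 2 * N A" unfolding g_def by (intro add_mono mult_left_mono N_taun) auto
  finally have "N (g n - g 0) \<le> 4 * N A" by simp
  then have "(1 / real n)^2 * N (g n - g 0) \<le> (1 / real n)^2 * (4 * N A)"
    by (intro mult_left_mono) auto
  then show ?thesis unfolding eq N_sr by (simp add: field_simps)
qed

lemma W_orb: "\<exists>K\<ge>0. \<forall>j n. n \<ge> 1 \<longrightarrow> N (W j n ((\<tau>^^i) A) - W j n A) \<le> K / (real n)^2"
proof (induction i)
  case 0
  show ?case by (rule exI[of _ 0]) (simp add: N_def B_def)
next
  case (Suc i)
  then obtain K where K: "K \<ge> 0" "\<And>j n. n \<ge> 1 \<Longrightarrow> N (W j n ((\<tau>^^i) A) - W j n A) \<le> K / (real n)^2"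
    by blast
  have NA: "N A \<ge> 0" by (rule N_nonneg)
  show ?case
  proof (rule exI[of _ "8 * N A + 2 * K"], intro conjI allI impI)
    show "0 \<le> 8 * N A + 2 * K" using K NA by simp
    fix j n :: nat assume n: "n \<ge> 1"
    have "W j n ((\<tau>^^(Suc i)) A) - W j n A
        = (W j n ((\<tau>^^(Suc i)) A) - W j n ((\<tau>^^i) A)) + (W j n ((\<tau>^^i) A) - W j n A)" by simp
    then have "N (W j n ((\<tau>^^(Suc i)) A) - W j n A) \<le>
       2 * N (W j n ((\<tau>^^(Suc i)) A) - W j n ((\<tau>^^i) A)) + 2 * N (W j n ((\<tau>^^i) A) - W j n A)"
      using N_add_le by metis
    also have "... \<le> 2 * (4 * N A / (real n)^2) + 2 * (K / (real n)^2)"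
      using W_orb_step[OF n] K(2)[OF n] by (intro add_mono mult_left_mono) auto
    also have "... = (8 * N A + 2 * K) / (real n)^2" by (simp add: add_divide_distrib)
    finally show "N (W j n ((\<tau>^^(Suc i)) A) - W j n A) \<le> (8 * N A + 2 * K) / (real n)^2" .
  qed
qed

lemma grp_rearr: "(x::'b::ab_group_add) - z + (y - w) = (x + y) - (z + w)"
  by (simp add: algebra_simps)

lemma W_C: "c \<in> CC A \<Longrightarrow> \<exists>K\<ge>0. \<forall>j n. n \<ge> 1 \<longrightarrow> N (W j n c - W j n A) \<le> K / (real n)^2"
proof (induction rule: CC.induct)
  case (orb k)
  then show ?case by (rule W_orb)
next
  case (cmb a b t)
  have tt: "0 \<le> t" "t \<le> 1" using cmb by auto
  obtain Ka where Ka: "Ka \<ge> 0" "\<And>j n. n \<ge> 1 \<Longrightarrow> N (W j n a - W j n A) \<le> Ka / (real n)^2"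
    using cmb by blast
  obtain Kb where Kb: "Kb \<ge> 0" "\<And>j n. n \<ge> 1 \<Longrightarrow> N (W j n b - W j n A) \<le> Kb / (real n)^2"
    using cmb by blast
  show ?case
  proof (rule exI[of _ "max Ka Kb"], intro conjI allI impI)
    show "0 \<le> max Ka Kb" using Ka by simp
    fix j n :: nat assume n: "n \<ge> 1"
    let ?a = "W j n a" and ?b = "W j n b" and ?c = "W j n A"
    have g: "sr t (?a - ?c) + sr (1 - t) (?b - ?c) = (sr t ?a + sr (1 - t) ?b) - (sr t ?c + sr (1 - t) ?c)"
      by (simp add: sr_diff grp_rearr)
    have "W j n (sr t a + sr (1 - t) b) - W j n A
        = sr t (?a - ?c) + sr (1 - t) (?b - ?c)"
      unfolding W_comb g sr_split ..
    then have "N (W j n (sr t a + sr (1 - t) b) - W j n A)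
        \<le> t * N (?a - ?c) + (1 - t) * N (?b - ?c)"
      using N_convex[of t "?a - ?c" "?b - ?c"] tt by simp
    also have "... \<le> t * (max Ka Kb / (real n)^2) + (1 - t) * (max Ka Kb / (real n)^2)"
    proof (rule add_mono)
      have "N (?a - ?c) \<le> max Ka Kb / (real n)^2"
        using Ka(2)[OF n] by (rule order_trans) (intro divide_right_mono, auto)
      then show "t * N (?a - ?c) \<le> t * (max Ka Kb / (real n)^2)"
        using tt(1) by (rule mult_left_mono)
      have "N (?b - ?c) \<le> max Ka Kb / (real n)^2"
        using Kb(2)[OF n] by (rule order_trans) (intro divide_right_mono, auto)
      then show "(1 - t) * N (?b - ?c) \<le> (1 - t) * (max Ka Kb / (real n)^2)"
        using tt(2) by (intro mult_left_mono) auto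
    qed
    also have "... = (t + (1 - t)) * (max Ka Kb / (real n)^2)" by (simp only: distrib_right)
    also have "... = max Ka Kb / (real n)^2" by simp
    finally show "N (W j n (sr t a + sr (1 - t) b) - W j n A) \<le> max Ka Kb / (real n)^2" .
  qed
qed


lemma N_lower_phi: "N w \<ge> (cmod (\<phi> w))^2"
proof -
  define c where "c = \<phi> w"
  have Bw1: "B w 1 = cnj c" using B_herm[of 1 w] by (simp add: B_one_left c_def)
  have "0 \<le> N (w - sm c 1)" by (rule N_nonneg)
  also have "N (w - sm c 1) = N w - 2 * Re (c * cnj c) + (cmod c)^2"
    by (simp add: N_diff N_sm N_one B_sm_right Bw1)
  also have "Re (c * cnj c) = (cmod c)^2" using cmod_power2[of c] by (simp add: power2_eq_square)
  finally show ?thesis unfolding c_def by simp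
qed

lemma W_B: "B a (W j n c) = (1 / of_nat n) * (\<Sum>k<n. B a ((\<tau>^^(j+k)) c))"
  unfolding W_def by (simp add: B_sr_right B_sum_right)

lemma main:
  assumes eps: "\<epsilon> > 0"
  shows "\<exists>n\<ge>1. \<forall>j. \<exists>k<n. Re (B A ((\<tau>^^(j+k)) A)) > (cmod (\<phi> A))^2 - \<epsilon>"
proof -
  define M where "M = N A"
  have M0: "M \<ge> 0" unfolding M_def by (rule N_nonneg)
  define m where "m = Inf (N ` CC A)"
  have bdd: "bdd_below (N ` CC A)" by (rule bdd_belowI[of _ 0]) (auto intro: N_nonneg)
  have ne: "N ` CC A \<noteq> {}" using A_in_C by auto
  have m_le: "m \<le> N c" if "c \<in> CC A" for c
    unfolding m_def using bdd that by (auto intro: cInf_lower)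
  define t where "t = min 1 (\<epsilon> / (6 * (M + 1)))"
  have t0: "t > 0" unfolding t_def using eps M0 by simp
  have t1: "t \<le> 1" unfolding t_def by simp
  have tM: "t * M \<le> \<epsilon> / 6"
  proof -
    have "t * M \<le> (\<epsilon> / (6 * (M + 1))) * M" unfolding t_def using M0 by (intro mult_right_mono) auto
    also have "... \<le> (\<epsilon> / (6 * (M + 1))) * (M + 1)" using M0 eps by (intro mult_left_mono) auto
    also have "... = \<epsilon> / 6" using M0 by (simp add: field_simps)
    finally show ?thesis .
  qed
  define \<delta> where "\<delta> = t * \<epsilon> / 18"
  have d0: "\<delta> > 0" unfolding \<delta>_def using t0 eps by simp
  have "\<exists>x\<in>N ` CC A. x < m + \<delta>"
    using cInf_less_iff[OF ne bdd, of "m + \<delta>"] d0 unfolding m_def by simp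
  then obtain w where w: "w \<in> CC A" "N w < m + \<delta>" by auto
  obtain K where K: "K \<ge> 0" "\<And>j n. n \<ge> 1 \<Longrightarrow> N (W j n w - W j n A) \<le> K / (real n)^2"
    using W_C[OF w(1)] by blast
  define n where "n = nat \<lceil>4 * K / (t * \<epsilon>)\<rceil> + 1"
  have n1: "n \<ge> 1" unfolding n_def by simp
  have nK: "real n > 4 * K / (t * \<epsilon>)" unfolding n_def by linarith
  have Kn: "K / (real n)^2 \<le> t * \<epsilon> / 4"
  proof -
    have "real n \<le> (real n)^2" using n1 by (simp add: power2_eq_square)
    then have "K / (real n)^2 \<le> K / real n" using K(1) n1 by (intro divide_left_mono) auto
    also have "K / real n \<le> t * \<epsilon> / 4"
    proof -
      have "4 * K < real n * (t * \<epsilon>)" using nK t0 eps by (simp add: field_simps)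
      then show ?thesis using n1 by (simp add: field_simps)
    qed
    finally show ?thesis .
  qed
  have phiw: "\<phi> w = \<phi> A" using C_phi[OF w(1)] .
  have Nw: "N w \<ge> (cmod (\<phi> A))^2" using N_lower_phi[of w] phiw by simp
  have NwA: "N w \<le> M" unfolding M_def using C_N[OF w(1)] .
  have minim: "Re (B A w) \<ge> N w - \<delta> / (2 * t) - 2 * t * M"
  proof -
    define X where "X = Re (B w A) - N w"
    have g: "sr t A + sr (1 - t) w \<in> CC A" using t0 t1 A_in_C w(1) by (intro CC.cmb) auto
    have geq: "sr t A + sr (1 - t) w = w + sr t (A - w)"
      using sr_split[of t w] by (simp add: sr_diff algebra_simps)
    have "N (w + sr t (A - w)) = N w + 2 * (t * Re (B w (A - w))) + t^2 * N (A - w)"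
      by (simp add: N_add N_sr Re_B_sr_right)
    moreover have "Re (B w (A - w)) = X" unfolding X_def N_def by (simp add: B_diff_right)
    moreover have "N (w + sr t (A - w)) > N w - \<delta>" using m_le[OF g] geq w(2) by simp
    moreover have "N (A - w) \<le> 4 * M"
      using N_diff_le[of A w] NwA unfolding M_def by simp
    moreover have "t^2 * N (A - w) \<le> t^2 * (4 * M)"
      using calculation(4) by (intro mult_left_mono) auto
    ultimately have "2 * t * X > - \<delta> - 4 * t^2 * M" by (simp add: algebra_simps)
    moreover have "2 * t * (X + \<delta> / (2 * t) + 2 * t * M) = 2 * t * X + \<delta> + 4 * t^2 * M"
      using t0 by (simp add: algebra_simps power2_eq_square)
    ultimately have "2 * t * (X + \<delta> / (2 * t) + 2 * t * M) > 0" by linarith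
    then have "X + \<delta> / (2 * t) + 2 * t * M > 0" using t0 by (simp add: zero_less_mult_iff)
    moreover have "Re (B A w) = Re (B w A)" by (rule Re_B_swap)
    ultimately show ?thesis unfolding X_def by linarith
  qed
  show ?thesis
  proof (rule exI[of _ n], intro conjI allI)
    show "n \<ge> 1" by (rule n1)
    fix j
    define a where "a = W j n w"
    have a: "a \<in> CC A" "N a \<le> N w" using W_in[OF w(1) n1] unfolding a_def by auto
    define h where "h = sr (1/2) a + sr (1/2) w"
    have h: "h \<in> CC A" unfolding h_def using CC.cmb[OF a(1) w(1), of "1/2"] by simp
    have "N h = N (a + w) / 4" unfolding h_def sr_add[symmetric] N_sr by (simp add: power2_eq_square)
    moreover have "N (a + w) + N (a - w) = 2 * N a + 2 * N w" using N_add[of a w] N_diff[of a w] by simp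
    moreover have "m \<le> N h" using m_le[OF h] .
    ultimately have Naw: "N (a - w) \<le> 4 * \<delta>" using a(2) w(2) by linarith
    define D where "D = W j n A - w"
    have "D = (W j n A - a) + (a - w)" unfolding D_def by simp
    then have "N D \<le> 2 * N (W j n A - a) + 2 * N (a - w)" using N_add_le by metis
    moreover have "N (W j n A - a) \<le> K / (real n)^2" using K(2)[OF n1, of j] N_swap unfolding a_def by metis
    ultimately have ND: "N D \<le> 2 * (t * \<epsilon> / 4) + 8 * \<delta>" using Kn Naw by linarith
    have low: "- (t * M + N D / t) \<le> 2 * Re (B A D)" using lower_bound[OF t0] unfolding M_def by simp
    have "N D / t \<le> (2 * (t * \<epsilon> / 4) + 8 * \<delta>) / t" using ND t0 by (intro divide_right_mono) auto
    also have "... = \<epsilon> / 2 + 8 * \<epsilon> / 18" unfolding \<delta>_def using t0 by (simp add: field_simps)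
    finally have NDt: "N D / t \<le> \<epsilon> / 2 + 8 * \<epsilon> / 18" .
    have dt: "\<delta> / (2 * t) = \<epsilon> / 36" unfolding \<delta>_def using t0 by (simp add: field_simps)
    have WA: "W j n A = w + D" unfolding D_def by simp
    have "Re (B A (W j n A)) = Re (B A w) + Re (B A D)" unfolding WA by (simp add: B_add_right)
    then have big: "Re (B A (W j n A)) > (cmod (\<phi> A))^2 - \<epsilon>"
      using minim Nw low NDt dt tM eps by linarith
    show "\<exists>k<n. Re (B A ((\<tau>^^(j+k)) A)) > (cmod (\<phi> A))^2 - \<epsilon>"
    proof (rule ccontr)
      assume "\<not> ?thesis"
      then have le: "\<And>k. k < n \<Longrightarrow> Re (B A ((\<tau>^^(j+k)) A)) \<le> (cmod (\<phi> A))^2 - \<epsilon>" by auto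
      have "Re (\<Sum>k<n. B A ((\<tau>^^(j+k)) A)) = (\<Sum>k<n. Re (B A ((\<tau>^^(j+k)) A)))" by simp
      also have "... \<le> (\<Sum>k<n. (cmod (\<phi> A))^2 - \<epsilon>)" using le by (intro sum_mono) auto
      also have "... = real n * ((cmod (\<phi> A))^2 - \<epsilon>)" by simp
      finally have S: "Re (\<Sum>k<n. B A ((\<tau>^^(j+k)) A)) \<le> real n * ((cmod (\<phi> A))^2 - \<epsilon>)" .
      have np: "real n > 0" using n1 by simp
      have "Re (B A (W j n A)) = Re (\<Sum>k<n. B A ((\<tau>^^(j+k)) A)) / real n"
        unfolding W_B by simp
      also have "... \<le> (cmod (\<phi> A))^2 - \<epsilon>"
        using S np by (simp add: pos_divide_le_eq mult.commute)
      finally show False using big by simp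
    qed
  qed
qed

end

theorem theorem4p1:
  fixes sm :: "complex \<Rightarrow> 'a::ring_1 \<Rightarrow> 'a" and st :: "'a \<Rightarrow> 'a"
    and \<phi> :: "'a \<Rightarrow> complex" and \<tau> :: "'a \<Rightarrow> 'a" and A :: 'a and \<epsilon> :: real
  assumes "star_dynamical_system sm st \<phi> \<tau>" and "\<epsilon> > 0"
  shows "relatively_dense {k::nat. k \<ge> 1 \<and> cmod (\<phi> (st A * (\<tau> ^^ k) A)) > (cmod (\<phi> A))\<^sup>2 - \<epsilon>}"
proof -
  interpret sds sm st \<phi> \<tau> by standard (rule assms(1))
  obtain n where n: "n \<ge> 1" "\<And>j. \<exists>k<n. Re (B A ((\<tau>^^(j+k)) A)) > (cmod (\<phi> A))^2 - \<epsilon>"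
    using main[OF assms(2), of A] by blast
  show ?thesis
    unfolding relatively_dense_def
  proof (rule exI[of _ n], intro conjI allI impI)
    show "n \<ge> 1" by (rule n(1))
    fix j :: nat assume j: "j \<ge> 1"
    obtain k where k: "k < n" "Re (B A ((\<tau>^^(j+k)) A)) > (cmod (\<phi> A))^2 - \<epsilon>" using n(2) by blast
    have "cmod (\<phi> (st A * (\<tau> ^^ (j+k)) A)) \<ge> Re (B A ((\<tau>^^(j+k)) A))"
      unfolding B_def by (rule complex_Re_le_cmod)
    then have "j + k \<in> {k::nat. k \<ge> 1 \<and> cmod (\<phi> (st A * (\<tau> ^^ k) A)) > (cmod (\<phi> A))\<^sup>2 - \<epsilon>}"
      using k j by auto
    moreover have "j + k \<in> {j..<j+n}" using k by simp
    ultimately show "{k::nat. k \<ge> 1 \<and> cmod (\<phi> (st A * (\<tau> ^^ k) A)) > (cmod (\<phi> A))\<^sup>2 - \<epsilon>} \<inter> {j..<j+n} \<noteq> {}"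
      by blast
  qed
qed


end
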